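(* Fix an integer base $B\ge 2$. Assume Dickson's conjecture holds. Then for every positive integer $t$ there exists a positive integer $N$ such that $N, N+1, \ldots, N+t-1$ are all economical base $B$.
   Context: For a positive integer $n$, $\delta(n)$ is the number of digits of $n$ in base $B$, i.e. $\delta(n)=k$ iff $B^{k-1}\le n<B^k$. Define $\delta'(1)=0$ and $\delta'(a)=\delta(a)$ for $a>1$. If $n=\prod_{i} p_i^{a_i}$ is the prime power factorisation, set $\phi(n)=\sum_i \big(\delta(p_i)+\delta'(a_i)\big)$ (with $\phi(1)=0$), and $h(n)=\delta(n)-\phi(n)$. $n$ is economical if $h(n)\ge 0$. Dickson's conjecture: for any finite family of linear functions $f_i(x)=a_i x+b_i$ ($i=1,\dots,s$) with integers $a_i\ge1$, $b_i$, if there is no integer $m>1$ dividing $f_1(x)\cdots f_s(x)$ for every integer $x$, then there are infinitely many positive integers $x$ for which $f_1(x),\dots,f_s(x)$ are all prime. *)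

theory Defs
  imports "HOL-Computational_Algebra.Primes"
begin

definition ndigits :: "nat \<Rightarrow> nat \<Rightarrow> nat" where
  "ndigits B n = (LEAST k. n < B ^ k)"

definition ndigits' :: "nat \<Rightarrow> nat \<Rightarrow> nat" where
  "ndigits' B a = (if a = 1 then 0 else ndigits B a)"

definition phi_digits :: "nat \<Rightarrow> nat \<Rightarrow> nat" where
  "phi_digits B n = (\<Sum>p\<in>prime_factors n. ndigits B p + ndigits' B (multiplicity p n))"

definition h_econ :: "nat \<Rightarrow> nat \<Rightarrow> int" where
  "h_econ B n = int (ndigits B n) - int (phi_digits B n)"

definition economical :: "nat \<Rightarrow> nat \<Rightarrow> bool" where
  "economical B n \<longleftrightarrow> h_econ B n \<ge> 0"

definition dickson_conjecture :: bool where
  "dickson_conjecture \<longleftrightarrow>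
     (\<forall>fs :: (int \<times> int) list.
        (\<forall>(a, b) \<in> set fs. a \<ge> 1) \<longrightarrow>
        \<not> (\<exists>m::int. m > 1 \<and> (\<forall>x::int. m dvd (\<Prod>(a, b) \<leftarrow> fs. a * x + b))) \<longrightarrow>
        infinite {x::nat. x > 0 \<and> (\<forall>(a, b) \<in> set fs. prime (a * int x + b))})"

end

theory Submission
  imports Defs "HOL-Number_Theory.Cong" "HOL-Library.Infinite_Set"
begin


lemma prime_dvd_prod_list_ex:
  fixes q :: int
  assumes "prime q" "q dvd prod_list xs"
  shows "\<exists>y\<in>set xs. q dvd y"
  using assms(2)
proof (induction xs)
  case Nil then show ?case using assms(1) using not_prime_unit by auto
next
  case (Cons a xs)
  then show ?case using assms(1) by (auto simp: prime_dvd_mult_iff)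
qed

lemma admissible:
  fixes fs :: "(int \<times> int) list"
  assumes cop: "\<forall>(a,b)\<in>set fs. coprime a b"
    and small: "\<forall>q::int. prime q \<and> q \<le> int (length fs) \<longrightarrow> (\<forall>(a,b)\<in>set fs. q dvd a)"
  shows "\<not> (\<exists>m::int. m > 1 \<and> (\<forall>x::int. m dvd (\<Prod>(a, b) \<leftarrow> fs. a * x + b)))"
proof
  assume "\<exists>m::int. m > 1 \<and> (\<forall>x::int. m dvd (\<Prod>(a, b) \<leftarrow> fs. a * x + b))"
  then obtain m :: int where m: "m > 1" "\<And>x. m dvd (\<Prod>(a, b) \<leftarrow> fs. a * x + b)" by blast
  obtain q where q: "prime q" "q dvd m" using prime_factor_int[of m] m(1) by auto
  have ex: "\<exists>(a,b)\<in>set fs. q dvd a * x + b" for x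
  proof -
    have "q dvd (\<Prod>(a, b) \<leftarrow> fs. a * x + b)" using q(2) m(2) dvd_trans by blast
    from prime_dvd_prod_list_ex[OF q(1) this] show ?thesis by auto
  qed
  have nb: "\<not> (q dvd a \<and> q dvd b)" if "(a,b) \<in> set fs" for a b
  proof
    assume "q dvd a \<and> q dvd b"
    then have "q dvd gcd a b" by simp
    moreover have "gcd a b = 1" using cop that by auto
    ultimately show False using q(1) using not_prime_unit by auto
  qed
  show False
  proof (cases "q \<le> int (length fs)")
    case True
    obtain a b where ab: "(a,b) \<in> set fs" "q dvd a * 0 + b" using ex[of 0] by auto
    have "q dvd a" using small True q(1) ab(1) by auto
    then show False using nb[OF ab(1)] ab(2) by simp
  next
    case False
    define g where "g = (\<lambda>x::nat. SOME ab. ab \<in> set fs \<and> q dvd fst ab * int x + snd ab)"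
    have g: "g x \<in> set fs \<and> q dvd fst (g x) * int x + snd (g x)" for x
    proof -
      from ex[of "int x"] obtain a b where "(a,b) \<in> set fs" "q dvd a * int x + b" by auto
      then show ?thesis unfolding g_def by (metis (mono_tags, lifting) fst_conv snd_conv someI)
    qed
    have "g ` {0..length fs} \<subseteq> set fs" using g by auto
    then have "card (g ` {0..length fs}) \<le> card (set fs)" by (simp add: card_mono)
    also have "\<dots> \<le> length fs" by (rule card_length)
    also have "\<dots> < card {0..length fs}" by simp
    finally have "\<not> inj_on g {0..length fs}" by (rule pigeonhole)
    then obtain x y where xy: "x \<in> {0..length fs}" "y \<in> {0..length fs}" "x \<noteq> y" "g x = g y"
      unfolding inj_on_def by blast
    obtain a b where ab: "g x = (a,b)" by (cases "g x")
    have in1: "(a,b) \<in> set fs" using g[of x] ab by simp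
    have d1: "q dvd a * int x + b" using g[of x] ab by simp
    have d2: "q dvd a * int y + b" using g[of y] ab xy(4) by simp
    have "q dvd (a * int x + b) - (a * int y + b)" using d1 d2 by (rule dvd_diff)
    then have "q dvd a * (int x - int y)" by (simp add: algebra_simps)
    then have "q dvd a \<or> q dvd (int x - int y)" using q(1) by (simp add: prime_dvd_mult_iff)
    then show False
    proof
      assume "q dvd a" then show False using nb[OF in1] d1 by (simp add: dvd_add_right_iff)
    next
      assume h: "q dvd (int x - int y)"
      have "int x - int y \<noteq> 0" using xy(3) by simp
      then have "\<bar>q\<bar> \<le> \<bar>int x - int y\<bar>" using h by (simp add: dvd_imp_le_int)
      moreover have "\<bar>int x - int y\<bar> \<le> int (length fs)" using xy(1,2) by auto
      moreover have "q > 0" using q(1) prime_gt_0_int by blast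
      ultimately show False using False by linarith
    qed
  qed
qed



lemma nd_less: assumes "B \<ge> 2" shows "n < B ^ ndigits B n"
proof -
  have "n < 2 ^ n" by (rule less_exp)
  also have "(2::nat) ^ n \<le> B ^ n" using assms by (simp add: power_mono)
  finally have "\<exists>k. n < B ^ k" by blast
  then show ?thesis unfolding ndigits_def by (rule LeastI_ex)
qed

lemma nd_le: "n < B ^ k \<Longrightarrow> ndigits B n \<le> k"
  unfolding ndigits_def by (rule Least_le)

lemma nd_ge: assumes "B \<ge> 2" "B ^ k \<le> n" shows "k < ndigits B n"
proof (rule ccontr)
  assume "\<not> k < ndigits B n"
  then have "B ^ ndigits B n \<le> B ^ k" using assms(1) by (simp add: power_increasing)
  then show False using nd_less[OF assms(1), of n] assms(2) by simp
qed

lemma nd_pos: assumes "B \<ge> 2" "n \<ge> 1" shows "ndigits B n \<ge> 1"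
  using nd_ge[OF assms(1), of 0 n] assms(2) by simp

lemma nd_low: assumes "B \<ge> 2" "n \<ge> 1" shows "B ^ (ndigits B n - 1) \<le> n"
proof (rule ccontr)
  assume "\<not> B ^ (ndigits B n - 1) \<le> n"
  then have "ndigits B n \<le> ndigits B n - 1" using nd_le[of n B] by simp
  then show False using nd_pos[OF assms] by simp
qed

lemma phi_mult_prime_pow:
  assumes "c > 0" "prime q" "\<not> q dvd c" "e > 0"
  shows "phi_digits B (c * q ^ e) = phi_digits B c + ndigits B q + ndigits' B e"
proof -
  have qe: "q ^ e \<noteq> 0" using assms(2) by (simp add: prime_gt_0_nat)
  have pq: "prime_factors (q ^ e) = {q}"
  proof safe
    fix p assume "p \<in> prime_factors (q ^ e)"
    then have "prime p" "p dvd q ^ e" by (auto simp: in_prime_factors_iff)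
    then show "p = q" using assms(2) by (metis prime_dvd_power primes_dvd_imp_eq)
  next
    show "q \<in> prime_factors (q ^ e)" using assms(2,4) qe by (auto simp: in_prime_factors_iff)
  qed
  have pf: "prime_factors (c * q ^ e) = insert q (prime_factors c)"
    using prime_factors_product[of c "q^e"] assms qe pq by auto
  have nq: "q \<notin> prime_factors c" using assms(3) by auto
  have mq: "multiplicity q (c * q ^ e) = e"
  proof -
    have "multiplicity q c = 0" using assms(3) by (rule not_dvd_imp_multiplicity_0)
    moreover have "multiplicity q (q ^ e) = e" using assms(2) by (intro multiplicity_same_power) auto
    moreover have "multiplicity q (c * q ^ e) = multiplicity q c + multiplicity q (q ^ e)"
      using assms(1,2) qe by (intro prime_elem_multiplicity_mult_distrib) auto
    ultimately show ?thesis by simp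
  qed
  have mp: "multiplicity p (c * q ^ e) = multiplicity p c" if "p \<in> prime_factors c" for p
  proof -
    have "prime p" using that by auto
    moreover have "p \<noteq> q" using that nq by auto
    ultimately have "\<not> p dvd q ^ e" using assms(2) by (metis prime_dvd_power primes_dvd_imp_eq)
    then have "multiplicity p (q ^ e) = 0" by (rule not_dvd_imp_multiplicity_0)
    moreover have "multiplicity p (c * q ^ e) = multiplicity p c + multiplicity p (q ^ e)"
      using assms(1) qe \<open>prime p\<close> by (intro prime_elem_multiplicity_mult_distrib) auto
    ultimately show ?thesis by simp
  qed
  show ?thesis unfolding phi_digits_def pf
    using nq mq mp by (simp add: sum.insert)
qed



lemma econ:
  assumes B: "B \<ge> 2" and j: "j \<ge> 1" and q: "prime q" "j < q" "B ^ (K+3) \<le> q"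
    and K: "phi_digits B j \<le> K" and p: "prime p" "j * q^2 < p"
  shows "economical B (j * q^2 * p)"
proof -
  have q1: "q \<ge> 1" "p \<ge> 1" using q p prime_gt_0_nat by (auto simp: Suc_le_eq)
  have nqj: "\<not> q dvd j" using q j by (auto dest: dvd_imp_le)
  have c0: "j * q^2 > 0" using j q1 by simp
  have npc: "\<not> p dvd j * q^2" using p c0 by (auto dest: dvd_imp_le)
  have f1: "phi_digits B (j * q^2) = phi_digits B j + ndigits B q + ndigits' B 2"
    using phi_mult_prime_pow[of j q 2 B] j q nqj by simp
  have f2: "phi_digits B (j * q^2 * p^1) = phi_digits B (j*q^2) + ndigits B p + ndigits' B 1"
    using phi_mult_prime_pow[OF c0 p(1) npc, of 1 B] by simp
  have d2: "ndigits' B 2 \<le> 2"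
  proof -
    have "(2::nat) < 2^2" by simp
    also have "(2::nat)^2 \<le> B^2" using B by (intro power_mono) auto
    finally show ?thesis unfolding ndigits'_def using nd_le[of 2 B 2] by simp
  qed
  have d1: "ndigits' B 1 = 0" by (simp add: ndigits'_def)
  have dq: "ndigits B q \<ge> K + 4" using nd_ge[OF B q(3)] by simp
  define a where "a = ndigits B q"
  define b where "b = ndigits B p"
  have a1: "a \<ge> 1" "b \<ge> 1" using nd_pos[OF B] q1 a_def b_def by auto
  have "B ^ (2*(a-1) + (b-1)) = B^(a-1) * B^(a-1) * B^(b-1)" by (simp add: power_add mult_2)
  also have "\<dots> \<le> q * q * p" using nd_low[OF B q1(1)] nd_low[OF B q1(2)] a_def b_def
    by (intro mult_mono) auto
  also have "\<dots> \<le> j * q^2 * p" using j by (simp add: power2_eq_square)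
  finally have "2*(a-1) + (b-1) < ndigits B (j * q^2 * p)" by (rule nd_ge[OF B])
  then have dn: "ndigits B (j * q^2 * p) \<ge> 2*a + b - 2" using a1 by linarith
  have "phi_digits B (j * q^2 * p) \<le> K + a + 2 + b" using f1 f2 d1 d2 K a_def b_def by simp
  then show ?thesis unfolding economical_def h_econ_def using dn dq a_def by linarith
qed



theorem mainTheorem6:
  fixes B :: nat
  assumes "B \<ge> 2" and "dickson_conjecture"
  shows "\<forall>t::nat. t > 0 \<longrightarrow> (\<exists>N::nat. N > 0 \<and> (\<forall>i<t. economical B (N + i)))"
proof (intro allI impI)
  fix t :: nat assume t0: "t > 0"
  note B = assms(1)
  define K where "K = (\<Sum>j\<in>{1..t}. phi_digits B j)"
  have Kj: "phi_digits B j \<le> K" if "j \<in> {1..t}" for j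
    unfolding K_def using that by (intro member_le_sum) auto
  define M where "M = t + B ^ (K+3)"
  define S where "S = {p::nat. prime p \<and> M < p}"
  have infS: "infinite S"
  proof -
    have "S = {p. prime p} - {..M}" unfolding S_def by auto
    then show ?thesis using primes_infinite by auto
  qed
  define q where "q = enumerate S"
  have qS: "prime (q j) \<and> M < q j" for j using enumerate_in_set[OF infS] unfolding q_def S_def by auto
  have qinj: "q i = q j \<Longrightarrow> i = j" for i j
    using enumerate_mono[OF _ infS] unfolding q_def by (metis linorder_neqE_nat less_irrefl)
  have qt: "t < q j" "B ^ (K+3) \<le> q j" for j using qS[of j] unfolding M_def by auto
  have qpos: "q j > 0" for j using qS[of j] prime_gt_0_nat by blast
  define T where "T = (fact t :: nat)^2"
  have Tpos: "T > 0" unfolding T_def by simp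
  have nqfact: "\<not> q j dvd fact t" for j using qS[of j] qt(1)[of j] prime_dvd_fact_iff[of "q j" t] by auto
  define m where "m = (\<lambda>i. if i = 0 then T else q i ^ 3)"
  define u where "u = (\<lambda>i. if i = 0 then 0 else q i ^ 3 + q i ^ 2 - i)"
  have cop: "\<forall>i\<in>{0..t}. \<forall>j\<in>{0..t}. i \<noteq> j \<longrightarrow> coprime (m i) (m j)"
  proof (intro ballI impI)
    fix i j assume ij: "i \<in> {0..t}" "j \<in> {0..t}" "i \<noteq> j"
    have c1: "coprime T (q k ^ 3)" for k
    proof -
      have "coprime (q k) (fact t)" using qS[of k] nqfact[of k] by (simp add: prime_imp_coprime)
      then show ?thesis unfolding T_def by (simp add: coprime_commute)
    qed
    have c2: "coprime (q i ^ 3) (q j ^ 3)"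
    proof -
      have "q i \<noteq> q j" using qinj ij(3) by blast
      then have "coprime (q i) (q j)" using qS by (simp add: primes_coprime)
      then show ?thesis by simp
    qed
    show "coprime (m i) (m j)" using c1 c2 ij(3) unfolding m_def by (auto simp: coprime_commute)
  qed
  obtain r where r: "\<forall>i\<in>{0..t}. [r = u i] (mod m i)"
    using chinese_remainder_nat[OF _ cop] by auto
  have Tr: "T dvd r" using r[rule_format, of 0] unfolding m_def u_def by (simp add: cong_0_iff)
  have rj: "(r + j) mod (q j ^ 3) = q j ^ 2" if "j \<in> {1..t}" for j
  proof -
    have "j \<in> {0..t}" "j \<noteq> 0" using that by auto
    then have "[r = u j] (mod m j)" using r by blast
    then have "[r = u j] (mod q j ^ 3)" using \<open>j \<noteq> 0\<close> unfolding m_def by simp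
    then have "[r + j = u j + j] (mod q j ^ 3)" by (rule cong_add_rcancel_nat[THEN iffD2])
    moreover have "u j + j = q j ^ 3 + q j ^ 2"
    proof -
      have "j < q j ^ 3"
      proof -
        have "q j \<le> q j ^ 3" using qpos[of j] by (intro self_le_power) auto
        then show ?thesis using qt(1)[of j] that by auto
      qed
      then show ?thesis using that unfolding u_def by auto
    qed
    ultimately have "(r + j) mod (q j ^ 3) = (q j ^ 3 + q j ^ 2) mod (q j ^ 3)" by (simp add: cong_def)
    also have "\<dots> = q j ^ 2"
    proof -
      have "q j ^ 2 < q j ^ 3" using qS[of j] prime_gt_1_nat[of "q j"] by (intro power_strict_increasing) auto
      then show ?thesis by simp
    qed
    finally show ?thesis .
  qed
  have q2rj: "q j ^ 2 dvd r + j" if "j \<in> {1..t}" for j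
  proof -
    have "r + j = q j ^ 3 * ((r + j) div q j ^ 3) + q j ^ 2" using rj[OF that] by (metis div_mult_mod_eq mult.commute)
    also have "\<dots> = q j ^ 2 * (q j * ((r + j) div q j ^ 3) + 1)" by (simp add: algebra_simps power3_eq_cube power2_eq_square)
    finally show ?thesis by (metis dvd_triv_left)
  qed
  have q3rj: "\<not> q j ^ 3 dvd r + j" if "j \<in> {1..t}" for j
    using rj[OF that] qpos[of j] by (simp add: dvd_eq_mod_eq_0)
  define c where "c = (\<lambda>j. j * q j ^ 2)"
  define P where "P = (\<Prod>j\<in>{1..t}. q j ^ 2)"
  define L where "L = T * P"
  have Ppos: "P > 0" unfolding P_def using qpos by (simp add: prod_pos)
  have Lpos: "L > 0" unfolding L_def using Tpos Ppos by simp
  have jfact: "j dvd fact t" if "j \<in> {1..t}" for j using that by (intro dvd_fact) auto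
  have jT: "j dvd T" if "j \<in> {1..t}" for j unfolding T_def using jfact[OF that] by (simp add: power2_eq_square)
  have cpos: "c j > 0" if "j \<in> {1..t}" for j using that qpos unfolding c_def by auto
  have cL: "c j dvd L" if "j \<in> {1..t}" for j
    unfolding c_def L_def P_def using that jT[OF that] by (intro mult_dvd_mono dvd_prodI) auto
  have cr: "c j dvd r + j" if "j \<in> {1..t}" for j
  proof -
    have "j dvd r + j" using jT[OF that] Tr by (meson dvd_add dvd_refl dvd_trans)
    moreover have "coprime j (q j ^ 2)"
    proof -
      have "\<not> q j dvd j" using qt(1)[of j] that by (auto dest: dvd_imp_le)
      then have "coprime (q j) j" using qS[of j] by (simp add: prime_imp_coprime)
      then show ?thesis by (simp add: coprime_commute)
    qed
    ultimately show ?thesis unfolding c_def using q2rj[OF that] by (simp add: divides_mult)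
  qed
  define a where "a = (\<lambda>j. L div c j)"
  define b where "b = (\<lambda>j. (r + j) div c j)"
  have ca: "c j * a j = L" if "j \<in> {1..t}" for j unfolding a_def using cL[OF that] by simp
  have cb: "c j * b j = r + j" if "j \<in> {1..t}" for j unfolding b_def using cr[OF that] by simp
  have apos: "a j \<ge> 1" if "j \<in> {1..t}" for j using ca[OF that] Lpos
    by (metis One_nat_def less_one mult_0_right not_le less_irrefl)
  have coprab: "coprime (a j) (b j)" if jt: "j \<in> {1..t}" for j
  proof (rule ccontr)
    assume "\<not> coprime (a j) (b j)"
    then have "gcd (a j) (b j) \<noteq> 1" by (simp add: coprime_iff_gcd_eq_1)
    then obtain p where p: "prime p" "p dvd gcd (a j) (b j)" using prime_factor_nat by blast
    then have pa: "p dvd a j" and pb: "p dvd b j" by auto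
    have "a j dvd L" using ca[OF jt] dvd_triv_right[of "a j" "c j"] by simp
    then have pL: "p dvd L" using pa by (rule dvd_trans[rotated])
    have "p * c j dvd b j * c j" using pb by (rule mult_dvd_mono) simp
    moreover have "b j * c j = r + j" using cb[OF jt] by (simp add: mult.commute)
    ultimately have pcr: "p * c j dvd r + j" by simp
    have prj: "p dvd r + j" using pcr by (rule dvd_mult_left)
    have "p dvd T \<or> p dvd P" using pL p(1) unfolding L_def by (simp add: prime_dvd_mult_iff)
    then show False
    proof
      assume "p dvd T"
      then have "p dvd fact t" using p(1) unfolding T_def by (simp add: prime_dvd_power_iff)
      then have "p * j dvd fact t * fact t" using jfact[OF jt] by (rule mult_dvd_mono)
      then have "p * j dvd T" unfolding T_def by (simp add: power2_eq_square)
      then have pjr: "p * j dvd r" using Tr by (rule dvd_trans)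
      have "p * j dvd p * c j" unfolding c_def by (simp add: mult.assoc[symmetric])
      then have "p * j dvd r + j" using pcr by (rule dvd_trans)
      then have "p * j dvd (r + j) - r" using pjr by (rule dvd_diff_nat)
      then have "p * j dvd j" by simp
      moreover have j0: "j > 0" using jt by auto
      ultimately have "p = 1" using dvd_mult_cancel2[OF j0, of p] by blast
      then show False using p(1) by simp
    next
      assume "p dvd P"
      then obtain k where k: "k \<in> {1..t}" "p dvd q k ^ 2" unfolding P_def using p(1) by (auto simp: prime_dvd_prod_iff)
      then have "p dvd q k" using p(1) by (simp add: prime_dvd_power_iff)
      then have pk: "p = q k" using primes_dvd_imp_eq[OF p(1) conjunct1[OF qS[of k]]] by blast
      show False
      proof (cases "k = j")
        case True
        have "q j ^ 3 = p * (q j ^ 2)" using pk True by (simp add: power3_eq_cube power2_eq_square)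
        moreover have "p * (q j ^ 2) dvd p * c j" unfolding c_def by (intro mult_dvd_mono) auto
        ultimately have "q j ^ 3 dvd p * c j" by simp
        then have "q j ^ 3 dvd r + j" using pcr by (rule dvd_trans)
        then show False using q3rj[OF jt] by simp
      next
        case False
        have "p dvd q k ^ 2" using pk by simp
        then have prk: "p dvd r + k" using q2rj[OF k(1)] by (rule dvd_trans)
        have lt: "p > t" using qt(1) pk by simp
        show False
        proof (cases "j < k")
          case True
          have "p dvd (r + k) - (r + j)" using prk prj by (rule dvd_diff_nat)
          then have "p dvd k - j" by simp
          then have "p \<le> k - j" using True by (intro dvd_imp_le) auto
          then show False using lt k jt by auto
        next
          case False2: False
          then have jk: "k < j" using False by simp
          have "p dvd (r + j) - (r + k)" using prj prk by (rule dvd_diff_nat)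
          then have "p dvd j - k" by simp
          then have "p \<le> j - k" using jk by (intro dvd_imp_le) auto
          then show False using lt k jt by auto
        qed
      qed
    qed
  qed
  have smalla: "p dvd a j" if "prime p" "p \<le> t" "j \<in> {1..t}" for p j
  proof -
    have "p dvd fact t" using that prime_dvd_fact_iff by blast
    then have "p * j dvd fact t * fact t" using jfact[OF that(3)] by (rule mult_dvd_mono)
    then have "p * j dvd T" unfolding T_def by (simp add: power2_eq_square)
    moreover have "q j ^ 2 dvd P" unfolding P_def using that(3) by (intro dvd_prodI) auto
    ultimately have "(p * j) * q j ^ 2 dvd T * P" by (rule mult_dvd_mono)
    then have "p * c j dvd L" unfolding c_def L_def by (simp add: mult.assoc)
    then show ?thesis unfolding a_def using cL[OF that(3)] cpos[OF that(3)] by (simp add: dvd_div_iff_mult)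
  qed
  define fs where "fs = map (\<lambda>j. (int (a j), int (b j))) [1..<t+1]"
  have setfs: "set fs = (\<lambda>j. (int (a j), int (b j))) ` {1..t}" unfolding fs_def by auto
  have lenfs: "length fs = t" unfolding fs_def by simp
  have h1: "\<forall>(x, y) \<in> set fs. x \<ge> 1" using apos unfolding setfs by auto
  have h2: "\<not> (\<exists>m::int. m > 1 \<and> (\<forall>x::int. m dvd (\<Prod>(a, b) \<leftarrow> fs. a * x + b)))"
  proof (rule admissible)
    show "\<forall>(x, y)\<in>set fs. coprime x y" using coprab unfolding setfs by auto
    show "\<forall>p::int. prime p \<and> p \<le> int (length fs) \<longrightarrow> (\<forall>(x, y)\<in>set fs. p dvd x)"
    proof (intro allI impI ballI)
      fix p :: int and xy assume pp: "prime p \<and> p \<le> int (length fs)" and xy: "xy \<in> set fs"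
      obtain j where j: "j \<in> {1..t}" "xy = (int (a j), int (b j))" using xy unfolding setfs by auto
      have "p \<ge> 0" using pp prime_ge_0_int by blast
      then have "prime (nat p)" "nat p \<le> t" using pp lenfs by auto
      then have "nat p dvd a j" using smalla j(1) by blast
      then have "int (nat p) dvd int (a j)" by (simp only: int_dvd_int_iff)
      then have "p dvd int (a j)" using \<open>p \<ge> 0\<close> by simp
      then show "case xy of (x, y) \<Rightarrow> p dvd x" using j(2) \<open>p \<ge> 0\<close> by simp
    qed
  qed
  have inf: "infinite {x::nat. x > 0 \<and> (\<forall>(a, b) \<in> set fs. prime (a * int x + b))}"
    using assms(2) h1 h2 unfolding dickson_conjecture_def by blast
  define C where "C = (\<Sum>j\<in>{1..t}. c j)"
  obtain x where x: "x > C" "x > 0" "\<forall>(a, b) \<in> set fs. prime (a * int x + b)"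
  proof -
    from inf obtain n where "n > C" "n \<in> {x::nat. x > 0 \<and> (\<forall>(a, b) \<in> set fs. prime (a * int x + b))}"
      unfolding infinite_nat_iff_unbounded by blast
    then show ?thesis using that by blast
  qed
  define p where "p = (\<lambda>j. a j * x + b j)"
  have pprime: "prime (p j)" if "j \<in> {1..t}" for j
  proof -
    have "prime (int (a j) * int x + int (b j))" using x(3) that unfolding setfs by auto
    moreover have "int (p j) = int (a j) * int x + int (b j)" unfolding p_def by simp
    ultimately show ?thesis by (metis prime_nat_int_transfer)
  qed
  have pbig: "c j < p j" if "j \<in> {1..t}" for j
  proof -
    have "c j \<le> C" unfolding C_def using that by (intro member_le_sum) auto
    also have "\<dots> < x" by (rule x(1))
    also have "x \<le> a j * x" using apos[OF that] by simp
    also have "\<dots> \<le> p j" unfolding p_def by simp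
    finally show ?thesis .
  qed
  have eq: "c j * p j = L * x + r + j" if "j \<in> {1..t}" for j
  proof -
    have "c j * p j = (c j * a j) * x + c j * b j" unfolding p_def by (simp add: distrib_left mult.assoc)
    then show ?thesis using ca[OF that] cb[OF that] by simp
  qed
  show "\<exists>N::nat. N > 0 \<and> (\<forall>i<t. economical B (N + i))"
  proof (intro exI conjI allI impI)
    show "L * x + r + 1 > 0" by simp
    fix i assume "i < t"
    then have j: "i + 1 \<in> {1..t}" by simp
    have j1: "i + 1 \<ge> 1" by simp
    have jq: "i + 1 < q (i+1)" using qt(1)[of "i+1"] j by auto
    have pb: "(i+1) * q (i+1) ^ 2 < p (i+1)" using pbig[OF j] unfolding c_def .
    have "economical B ((i+1) * q (i+1) ^ 2 * p (i+1))"
      by (rule econ[OF B j1 conjunct1[OF qS[of "i+1"]] jq qt(2)[of "i+1"] Kj[OF j] pprime[OF j] pb])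
    moreover have "(i+1) * q (i+1) ^ 2 * p (i+1) = L * x + r + 1 + i" using eq[OF j] unfolding c_def by (simp add: algebra_simps)
    ultimately show "economical B (L * x + r + 1 + i)" by simp
  qed
qed

end
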